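(* Let $M$ be a finite-dimensional real vector space and $n\geq 1$. Let $\mathbb{T}^n$ be the $n$-torus (a product of $n$ circles) with coordinates $x_1,\dots,x_n$, coordinate vector fields $\partial_i=\partial_{x_i}$ and volume form $dV=dx_1\wedge\cdots\wedge dx_n$. Let $\Omega=\sum_{i=1}^n\omega_i\otimes\partial_i$ be a polysymplectic form on $M$, where $\omega_1,\dots,\omega_n$ are closed $2$-forms on $M$, and let $S:M\to\mathbb{R}$ be smooth. Choose $1$-forms $\theta_i$ on $M$ with $d\theta_i=\omega_i$, set \[ \widetilde{\Theta}=\sum_{i=1}^n(-1)^{i+1}\theta_i\wedge dx_1\wedge\cdots\wedge\widehat{dx_i}\wedge\cdots\wedge dx_n \] as an $n$-form on $\mathbb{T}^n\times M$, and define $\mathcal{A}^\Omega_S:C^\infty(\mathbb{T}^n,M)\to\mathbb{R}$ by \[ \mathcal{A}^\Omega_S(Z)=\int_{\mathbb{T}^n}Z^*\widetilde{\Theta}-\int_{\mathbb{T}^n}S(Z(\vec{x}))\,dV, \] where $Z$ is regarded as the section $\vec{x}\mapsto(\vec{x},Z(\vec{x}))$ of $\mathbb{T}^n\times M\to\mathbb{T}^n$. Then $Z\in C^\infty(\mathbb{T}^n,M)$ is a critical point of $\mathcal{A}^\Omega_S$ if and only if \[ (dS)_{Z(\vec{x})}=\Omega^\sharp((dZ)_{\vec{x}})\quad\text{for all }\vec{x}\in\mathbb{T}^n. \]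
   Context: An $\mathbb{R}^n$-valued form $\Omega$ on $M$ is non-degenerate if $\Omega(V,\cdot)=0$ implies $V=0$; an $\mathbb{R}^n$-valued $2$-form is polysymplectic if it is closed and non-degenerate. Here $\mathbb{R}^n$ is identified with the span of $\partial_1,\dots,\partial_n$. For a linear map $X:\mathbb{R}^n\to TM$, $\Omega^\sharp(X)\in T^*M$ is defined by $\Omega^\sharp(X)(V)=\operatorname{tr}\big(\nu\mapsto\Omega(V,X(\nu))\big)$, the trace of the linear endomorphism $\nu\mapsto\Omega(V,X(\nu))$ of $\mathbb{R}^n$. For $Z:\mathbb{T}^n\to M$, $(dZ)_{\vec{x}}$ is regarded as a linear map $\mathbb{R}^n\to TM$. *)

theory Defs
  imports "HOL-Analysis.Analysis"
begin

fun Ck :: "nat \<Rightarrow> ('a::euclidean_space \<Rightarrow> 'b::real_normed_vector) \<Rightarrow> bool" where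
  "Ck 0 f = continuous_on UNIV f"
| "Ck (Suc k) f = (\<exists>f'. (\<forall>x. (f has_derivative f' x) (at x)) \<and> (\<forall>v. Ck k (\<lambda>x. f' x v)))"

definition smooth :: "('a::euclidean_space \<Rightarrow> 'b::real_normed_vector) \<Rightarrow> bool" where
  "smooth f \<longleftrightarrow> (\<forall>k. Ck k f)"

definition D :: "('a::real_normed_vector \<Rightarrow> 'b::real_normed_vector) \<Rightarrow> 'a \<Rightarrow> 'a \<Rightarrow> 'b" where
  "D f p v = frechet_derivative f (at p) v"

text \<open>A 1-form: p \<mapsto> linear functional on T_pM = M. A 2-form: p \<mapsto> alternating bilinear form.\<close>

definition smooth_1form :: "('m::euclidean_space \<Rightarrow> 'm \<Rightarrow> real) \<Rightarrow> bool" where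
  "smooth_1form \<theta> \<longleftrightarrow> (\<forall>p. linear (\<theta> p)) \<and> (\<forall>V. smooth (\<lambda>p. \<theta> p V))"

definition smooth_2form :: "('m::euclidean_space \<Rightarrow> 'm \<Rightarrow> 'm \<Rightarrow> real) \<Rightarrow> bool" where
  "smooth_2form \<omega> \<longleftrightarrow> (\<forall>p. bilinear (\<omega> p) \<and> (\<forall>V W. \<omega> p V W = - \<omega> p W V))
      \<and> (\<forall>V W. smooth (\<lambda>p. \<omega> p V W))"

text \<open>Exterior derivatives, evaluated on constant vector fields.\<close>
definition d1 :: "('m::euclidean_space \<Rightarrow> 'm \<Rightarrow> real) \<Rightarrow> 'm \<Rightarrow> 'm \<Rightarrow> 'm \<Rightarrow> real" where
  "d1 \<theta> p V W = D (\<lambda>q. \<theta> q W) p V - D (\<lambda>q. \<theta> q V) p W"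

definition d2 :: "('m::euclidean_space \<Rightarrow> 'm \<Rightarrow> 'm \<Rightarrow> real) \<Rightarrow> 'm \<Rightarrow> 'm \<Rightarrow> 'm \<Rightarrow> 'm \<Rightarrow> real" where
  "d2 \<omega> p U V W = D (\<lambda>q. \<omega> q V W) p U - D (\<lambda>q. \<omega> q U W) p V + D (\<lambda>q. \<omega> q U V) p W"

definition closed_2form :: "('m::euclidean_space \<Rightarrow> 'm \<Rightarrow> 'm \<Rightarrow> real) \<Rightarrow> bool" where
  "closed_2form \<omega> \<longleftrightarrow> smooth_2form \<omega> \<and> (\<forall>p U V W. d2 \<omega> p U V W = 0)"

text \<open>R^n-valued 2-form Omega = sum_i omega_i \<otimes> \<partial>_i, with R^n = real^'n and \<partial>_i = axis i 1.\<close>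
definition Omega_of :: "('n::finite \<Rightarrow> 'm \<Rightarrow> 'm \<Rightarrow> 'm \<Rightarrow> real) \<Rightarrow> 'm \<Rightarrow> 'm \<Rightarrow> 'm \<Rightarrow> real^'n" where
  "Omega_of \<omega> p V W = (\<chi> i. \<omega> i p V W)"

definition nondegenerate :: "('m::real_vector \<Rightarrow> 'm \<Rightarrow> 'm \<Rightarrow> real^'n::finite) \<Rightarrow> bool" where
  "nondegenerate \<Omega> \<longleftrightarrow> (\<forall>p V. (\<forall>W. \<Omega> p V W = 0) \<longrightarrow> V = 0)"

definition polysymplectic :: "('n::finite \<Rightarrow> 'm::euclidean_space \<Rightarrow> 'm \<Rightarrow> 'm \<Rightarrow> real) \<Rightarrow> bool" where
  "polysymplectic \<omega> \<longleftrightarrow> (\<forall>i. closed_2form (\<omega> i)) \<and> nondegenerate (Omega_of \<omega>)"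

definition Omega_sharp :: "('m \<Rightarrow> 'm \<Rightarrow> real^'n::finite) \<Rightarrow> (real^'n \<Rightarrow> 'm) \<Rightarrow> 'm \<Rightarrow> real" where
  "Omega_sharp \<Omega>p X V = trace (matrix (\<lambda>\<nu>. \<Omega>p V (X \<nu>)))"

definition torus_periodic :: "(real^'n::finite \<Rightarrow> 'b) \<Rightarrow> bool" where
  "torus_periodic Z \<longleftrightarrow> (\<forall>x i. Z (x + axis i 1) = Z x)"

definition torus_smooth_map :: "(real^'n::finite \<Rightarrow> 'm::euclidean_space) \<Rightarrow> bool" where
  "torus_smooth_map Z \<longleftrightarrow> smooth Z \<and> torus_periodic Z"

text \<open>With Theta~ = sum_i (-1)^(i+1) theta_i \<and> dx_1 \<and> .. ^dx_i .. \<and> dx_n, the pull-back along the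
  section x \<mapsto> (x, Z x) is Z^*Theta~ = (sum_i theta_i(Z x)(\<partial>_i Z(x))) dV.  The torus is the unit cube
  [0,1]^n with opposite faces identified, dV = Lebesgue measure.\<close>
definition action :: "('n::finite \<Rightarrow> 'm::euclidean_space \<Rightarrow> 'm \<Rightarrow> real) \<Rightarrow> ('m \<Rightarrow> real)
    \<Rightarrow> (real^'n \<Rightarrow> 'm) \<Rightarrow> real" where
  "action \<theta> S Z = integral (cbox 0 One) (\<lambda>x. (\<Sum>i\<in>UNIV. \<theta> i (Z x) (D Z x (axis i 1))))
                  - integral (cbox 0 One) (\<lambda>x. S (Z x))"

text \<open>Critical point: the first variation vanishes in every direction Y \<in> C^infinity(T^n, M)
  (the tangent space of the vector space C^infinity(T^n,M) at Z).\<close>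
definition critical_point :: "((real^'n::finite \<Rightarrow> 'm::euclidean_space) \<Rightarrow> real) \<Rightarrow> (real^'n \<Rightarrow> 'm) \<Rightarrow> bool" where
  "critical_point A Z \<longleftrightarrow>
     (\<forall>Y. torus_smooth_map Y \<longrightarrow> ((\<lambda>t. A (\<lambda>x. Z x + t *\<^sub>R Y x)) has_real_derivative 0) (at 0))"

end

theory Submission
  imports Defs
begin


lemma Ck_prev: "Ck (Suc k) f \<Longrightarrow> Ck k f"
proof (induction k arbitrary: f)
  case 0
  then obtain f' where "\<forall>x. (f has_derivative f' x) (at x)" by auto
  then have "\<forall>x. isCont f x" using has_derivative_continuous by blast
  then show ?case by (simp add: continuous_at_imp_continuous_on)
next
  case (Suc k)
  then obtain f' where "\<forall>x. (f has_derivative f' x) (at x)" "\<forall>v. Ck (Suc k) (\<lambda>x. f' x v)"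
    by (metis Ck.simps(2))
  then show ?case using Suc.IH by auto
qed

lemma Ck_le: "Ck k f \<Longrightarrow> j \<le> k \<Longrightarrow> Ck j f"
proof (induction k)
  case 0 then show ?case by simp
next
  case (Suc k) then show ?case by (metis Ck_prev le_Suc_eq)
qed

lemma Ck_cont: "Ck k f \<Longrightarrow> continuous_on UNIV f"
  using Ck_le[of k f 0] by simp

lemma Ck_D:
  assumes "Ck (Suc k) f"
  shows "(f has_derivative D f x) (at x)" "Ck k (\<lambda>x. D f x v)"
proof -
  obtain f' where f': "\<forall>x. (f has_derivative f' x) (at x)" "\<forall>v. Ck k (\<lambda>x. f' x v)"
    using assms by auto
  have e: "D f x = f' x" for x unfolding D_def using frechet_derivative_at f' by metis
  show "(f has_derivative D f x) (at x)" using f' e by simp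
  show "Ck k (\<lambda>x. D f x v)" using f' e by simp
qed

lemma Ck_const: "Ck k (\<lambda>x. c)"
proof (induction k arbitrary: c)
  case 0 then show ?case by simp
next
  case (Suc k)
  have "\<forall>x. ((\<lambda>x. c) has_derivative (\<lambda>x v. 0) x) (at x)" by simp
  then show ?case using Suc by (auto intro!: exI[of _ "\<lambda>x v. 0"])
qed

lemma Ck_add: "Ck k f \<Longrightarrow> Ck k g \<Longrightarrow> Ck k (\<lambda>x. f x + g x)"
proof (induction k arbitrary: f g)
  case 0 then show ?case by (simp add: continuous_on_add)
next
  case (Suc k)
  obtain f' where f': "\<forall>x. (f has_derivative f' x) (at x)" "\<forall>v. Ck k (\<lambda>x. f' x v)"
    using Suc.prems by auto
  obtain g' where g': "\<forall>x. (g has_derivative g' x) (at x)" "\<forall>v. Ck k (\<lambda>x. g' x v)"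
    using Suc.prems by auto
  have "\<forall>x. ((\<lambda>x. f x + g x) has_derivative (\<lambda>v. f' x v + g' x v)) (at x)"
    using f' g' by (auto intro: has_derivative_add)
  moreover have "\<forall>v. Ck k (\<lambda>x. f' x v + g' x v)" using f' g' Suc.IH by auto
  ultimately show ?case by (auto intro!: exI[of _ "\<lambda>x v. f' x v + g' x v"])
qed

lemma Ck_bl: "bounded_linear L \<Longrightarrow> Ck k f \<Longrightarrow> Ck k (\<lambda>x. L (f x))"
proof (induction k arbitrary: f)
  case 0 then show ?case
    using bounded_linear.continuous_on[of L UNIV f] by simp
next
  case (Suc k)
  obtain f' where f': "\<forall>x. (f has_derivative f' x) (at x)" "\<forall>v. Ck k (\<lambda>x. f' x v)"
    using Suc.prems by auto
  have "\<forall>x. ((\<lambda>x. L (f x)) has_derivative (\<lambda>v. L (f' x v))) (at x)"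
    using f' Suc.prems(1) by (auto intro: bounded_linear.has_derivative)
  moreover have "\<forall>v. Ck k (\<lambda>x. L (f' x v))" using f' Suc by auto
  ultimately show ?case by (auto intro!: exI[of _ "\<lambda>x v. L (f' x v)"])
qed

lemma Ck_mult: "Ck k a \<Longrightarrow> Ck k b \<Longrightarrow> Ck k (\<lambda>x. a x *\<^sub>R b x)"
proof (induction k arbitrary: a b)
  case 0 then show ?case by (simp add: continuous_on_scaleR)
next
  case (Suc k)
  obtain a' where a': "\<forall>x. (a has_derivative a' x) (at x)" "\<forall>v. Ck k (\<lambda>x. a' x v)"
    using Suc.prems by auto
  obtain b' where b': "\<forall>x. (b has_derivative b' x) (at x)" "\<forall>v. Ck k (\<lambda>x. b' x v)"
    using Suc.prems by auto
  have ak: "Ck k a" and bk: "Ck k b" using Suc.prems Ck_prev by blast+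
  have "\<forall>x. ((\<lambda>x. a x *\<^sub>R b x) has_derivative (\<lambda>v. a x *\<^sub>R b' x v + a' x v *\<^sub>R b x)) (at x)"
    using a' b' by (auto intro: has_derivative_scaleR)
  moreover have "\<forall>v. Ck k (\<lambda>x. a x *\<^sub>R b' x v + a' x v *\<^sub>R b x)"
    using a' b' ak bk Suc.IH by (auto intro!: Ck_add)
  ultimately show ?case by (auto intro!: exI[of _ "\<lambda>x v. a x *\<^sub>R b' x v + a' x v *\<^sub>R b x"])
qed

lemma Ck_sum: "finite A \<Longrightarrow> (\<And>a. a \<in> A \<Longrightarrow> Ck k (f a)) \<Longrightarrow> Ck k (\<lambda>x. \<Sum>a\<in>A. f a x)"
  by (induction A rule: finite_induct) (auto intro: Ck_add Ck_const)

lemma linear_expand: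
  fixes L :: "'b::euclidean_space \<Rightarrow> 'c::real_vector"
  assumes "linear L"
  shows "L w = (\<Sum>b\<in>Basis. (w \<bullet> b) *\<^sub>R L b)"
proof -
  have "L w = L (\<Sum>b\<in>Basis. (w \<bullet> b) *\<^sub>R b)" by (simp add: euclidean_representation)
  also have "\<dots> = (\<Sum>b\<in>Basis. (w \<bullet> b) *\<^sub>R L b)"
    using assms by (simp add: linear_sum linear_scale)
  finally show ?thesis .
qed

lemma Ck_comp:
  fixes f :: "'a::euclidean_space \<Rightarrow> 'b::euclidean_space" and g :: "'b \<Rightarrow> 'c::real_normed_vector"
  shows "Ck k f \<Longrightarrow> Ck k g \<Longrightarrow> Ck k (\<lambda>x. g (f x))"
proof (induction k arbitrary: f g)
  case 0
  then have "continuous_on UNIV f" "continuous_on UNIV g" by simp_all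
  then have "continuous_on UNIV (\<lambda>x. g (f x))" by (metis continuous_on_compose2 subset_UNIV)
  then show ?case by simp
next
  case (Suc k)
  obtain f' where f': "\<And>x. (f has_derivative f' x) (at x)" "\<And>v. Ck k (\<lambda>x. f' x v)"
    using Suc.prems by auto
  obtain g' where g': "\<And>x. (g has_derivative g' x) (at x)" "\<And>v. Ck k (\<lambda>x. g' x v)"
    using Suc.prems by auto
  have fk: "Ck k f" using Suc.prems Ck_prev by blast
  have dd: "((\<lambda>x. g (f x)) has_derivative (\<lambda>v. g' (f x) (f' x v))) (at x)" for x
    using diff_chain_at[OF f'(1)[of x] g'(1)[of "f x"]] by (simp add: o_def)
  have ck: "Ck k (\<lambda>x. g' (f x) (f' x v))" for v
  proof -
    have lin: "linear (g' y)" for y using g'(1) has_derivative_linear by blast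
    have "Ck k (\<lambda>x. f' x v \<bullet> b)" for b
      by (rule Ck_bl[where L="\<lambda>w. w \<bullet> b"]) (simp_all add: bounded_linear_inner_left f'(2))
    moreover have "Ck k (\<lambda>x. g' (f x) b)" for b
      using Suc.IH[OF fk g'(2)[of b]] .
    ultimately have "Ck k (\<lambda>x. (f' x v \<bullet> b) *\<^sub>R g' (f x) b)" for b
      by (rule Ck_mult)
    then have "Ck k (\<lambda>x. \<Sum>b\<in>Basis. (f' x v \<bullet> b) *\<^sub>R g' (f x) b)"
      by (rule Ck_sum[OF finite_Basis])
    moreover have "(\<lambda>x. g' (f x) (f' x v)) = (\<lambda>x. \<Sum>b\<in>Basis. (f' x v \<bullet> b) *\<^sub>R g' (f x) b)"
      by (rule ext) (rule linear_expand[OF lin])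
    ultimately show ?thesis by simp
  qed
  show ?case
    apply (simp only: Ck.simps)
    apply (rule exI[of _ "\<lambda>x v. g' (f x) (f' x v)"])
    using dd ck by blast
qed

lemma smooth_Ck: "smooth f \<Longrightarrow> Ck k f" by (simp add: smooth_def)
lemma smooth_cont: "smooth f \<Longrightarrow> continuous_on UNIV f"
  by (rule Ck_cont[of 0], erule smooth_Ck)
lemma smooth_deriv: "smooth f \<Longrightarrow> (f has_derivative D f x) (at x)"
  by (rule Ck_D(1)[of 0], erule smooth_Ck)
lemma smooth_D: "smooth f \<Longrightarrow> smooth (\<lambda>x. D f x v)"
  unfolding smooth_def by (metis Ck_D(2))
lemma smooth_const: "smooth (\<lambda>x. c)" by (simp add: smooth_def Ck_const)
lemma smooth_add: "smooth f \<Longrightarrow> smooth g \<Longrightarrow> smooth (\<lambda>x. f x + g x)"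
  by (simp add: smooth_def Ck_add)
lemma smooth_mult: "smooth a \<Longrightarrow> smooth b \<Longrightarrow> smooth (\<lambda>x. a x *\<^sub>R b x)"
  by (simp add: smooth_def Ck_mult)
lemma smooth_bl: "bounded_linear L \<Longrightarrow> smooth f \<Longrightarrow> smooth (\<lambda>x. L (f x))"
  by (simp add: smooth_def Ck_bl)
lemma smooth_comp:
  fixes f :: "'a::euclidean_space \<Rightarrow> 'b::euclidean_space" and g :: "'b \<Rightarrow> 'c::real_normed_vector"
  shows "smooth f \<Longrightarrow> smooth g \<Longrightarrow> smooth (\<lambda>x. g (f x))"
  by (simp add: smooth_def Ck_comp)
lemma smooth_sum: "finite A \<Longrightarrow> (\<And>a. a \<in> A \<Longrightarrow> smooth (f a)) \<Longrightarrow> smooth (\<lambda>x. \<Sum>a\<in>A. f a x)"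
  by (simp add: smooth_def Ck_sum)
lemma smooth_diff: "smooth f \<Longrightarrow> smooth g \<Longrightarrow> smooth (\<lambda>x. f x - g x)"
proof -
  assume a: "smooth f" "smooth g"
  have "smooth (\<lambda>x. (-1::real) *\<^sub>R g x)" by (rule smooth_mult[OF smooth_const a(2)])
  from smooth_add[OF a(1) this] show ?thesis by simp
qed
lemma smooth_inner: "smooth f \<Longrightarrow> smooth (\<lambda>x. f x \<bullet> b)"
  by (rule smooth_bl[where L="\<lambda>w. w \<bullet> b"]) (simp_all add: bounded_linear_inner_left)
lemma smooth_times: "smooth (a::_\<Rightarrow>real) \<Longrightarrow> smooth b \<Longrightarrow> smooth (\<lambda>x. a x * b x)"
  using smooth_mult[of a b] by simp



lemma inner_sR_basis: "k \<in> Basis \<Longrightarrow> i \<in> Basis \<Longrightarrow> (s *\<^sub>R k) \<bullet> i = (if i = k then s else 0)"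
  by (auto simp: inner_Basis)

lemma transl_inv:
  fixes u :: "'a::euclidean_space \<Rightarrow> real"
  assumes cu: "continuous_on UNIV u" and per: "\<And>x. u (x + k) = u x" and k: "k \<in> Basis"
    and s: "0 \<le> s" "s \<le> 1"
  shows "integral (cbox 0 One) (\<lambda>x. u (x + s *\<^sub>R k)) = integral (cbox 0 One) u"
proof -
  have int: "u integrable_on cbox a b" for a b
    using cu by (meson continuous_on_subset integrable_continuous subset_UNIV)
  have P1: "cbox (s *\<^sub>R k) (One + s *\<^sub>R k) \<inter> {x. x \<bullet> k \<le> 1} = cbox (s *\<^sub>R k) One"
    using k s by (auto simp: mem_box inner_add_left inner_diff_left inner_Basis split: if_splits; fastforce simp: inner_Basis split: if_splits) 
  have P2: "cbox (s *\<^sub>R k) (One + s *\<^sub>R k) \<inter> {x. x \<bullet> k \<ge> 1} = cbox k (One + s *\<^sub>R k)"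
    using k s by (auto simp: mem_box inner_add_left inner_diff_left inner_Basis split: if_splits; fastforce simp: inner_Basis split: if_splits)
  have Q1: "cbox 0 One \<inter> {x. x \<bullet> k \<le> s} = cbox 0 (One + s *\<^sub>R k - k)"
    using k s by (auto simp: mem_box inner_add_left inner_diff_left inner_Basis split: if_splits; fastforce simp: inner_Basis split: if_splits)
  have Q2: "cbox 0 One \<inter> {x. x \<bullet> k \<ge> s} = cbox (s *\<^sub>R k) One"
    using k s by (auto simp: mem_box inner_add_left inner_diff_left inner_Basis split: if_splits; fastforce simp: inner_Basis split: if_splits)
  have "((\<lambda>x. u (x + s *\<^sub>R k)) has_integral integral (cbox (s *\<^sub>R k) (One + s *\<^sub>R k)) u) (cbox 0 One)"
    using has_integral_affinity'[OF integrable_integral[OF int[of "s *\<^sub>R k" "One + s *\<^sub>R k"]], of 1 "s *\<^sub>R k"]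
    by simp
  then have L: "integral (cbox 0 One) (\<lambda>x. u (x + s *\<^sub>R k)) = integral (cbox (s *\<^sub>R k) (One + s *\<^sub>R k)) u"
    by (rule integral_unique)
  have "((\<lambda>x. u (x + k)) has_integral integral (cbox k (One + s *\<^sub>R k)) u) (cbox 0 (One + s *\<^sub>R k - k))"
    using has_integral_affinity'[OF integrable_integral[OF int[of "k" "One + s *\<^sub>R k"]], of 1 "k"]
    by simp
  then have A2: "integral (cbox k (One + s *\<^sub>R k)) u = integral (cbox 0 (One + s *\<^sub>R k - k)) u"
    using per by (simp add: integral_unique)
  have "integral (cbox (s *\<^sub>R k) (One + s *\<^sub>R k)) u
      = integral (cbox (s *\<^sub>R k) One) u + integral (cbox k (One + s *\<^sub>R k)) u"
    using integral_split[OF int k, of _ _ 1] P1 P2 by simp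
  also have "\<dots> = integral (cbox 0 One) u"
    using integral_split[OF int k, of 0 One s] Q1 Q2 A2 by simp
  finally show ?thesis using L by simp
qed

lemma transl_inv2:
  fixes u :: "'a::euclidean_space \<Rightarrow> real"
  assumes cu: "continuous_on UNIV u" and per: "\<And>x. u (x + k) = u x" and k: "k \<in> Basis"
    and s: "-1 \<le> s" "s \<le> 1"
  shows "integral (cbox 0 One) (\<lambda>x. u (x + s *\<^sub>R k)) = integral (cbox 0 One) u"
proof (cases "0 \<le> s")
  case True then show ?thesis using transl_inv[OF assms(1-3)] s by simp
next
  case False
  have "u (x + s *\<^sub>R k) = u (x + (s + 1) *\<^sub>R k)" for x
    using per[of "x + s *\<^sub>R k"] by (simp add: algebra_simps)
  then show ?thesis using transl_inv[OF assms(1-3), of "s+1"] s False by simp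
qed

lemma ibp:
  fixes u :: "'a::euclidean_space \<Rightarrow> real"
  assumes du: "\<And>x. (u has_derivative u' x) (at x)"
    and cu': "continuous_on UNIV (\<lambda>x. u' x k)"
    and per: "\<And>x. u (x + k) = u x" and k: "k \<in> Basis"
  shows "integral (cbox 0 One) (\<lambda>x. u' x k) = 0"
proof -
  have cu: "continuous_on UNIV u"
    using du has_derivative_continuous continuous_at_imp_continuous_on by blast
  define H where "H s = integral (cbox 0 One) (\<lambda>x. u (x + s *\<^sub>R k))" for s
  have lin: "linear (u' x)" for x using du has_derivative_linear by blast
  have d1: "((\<lambda>s. u (x + s *\<^sub>R k)) has_field_derivative u' (x + t *\<^sub>R k) k) (at t within UNIV)" for x t
  proof -
    have "((\<lambda>s. x + s *\<^sub>R k) has_derivative (\<lambda>h. h *\<^sub>R k)) (at t)"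
      by (auto intro!: derivative_eq_intros)
    from diff_chain_at[OF this du]
    have "((\<lambda>s. u (x + s *\<^sub>R k)) has_derivative (\<lambda>h. u' (x + t *\<^sub>R k) (h *\<^sub>R k))) (at t)"
      by (simp add: o_def)
    moreover have "(\<lambda>h. u' (x + t *\<^sub>R k) (h *\<^sub>R k)) = (*) (u' (x + t *\<^sub>R k) k)"
      using lin by (auto simp: linear_scale mult.commute)
    ultimately show ?thesis by (simp add: has_field_derivative_def)
  qed
  have cont: "continuous_on (UNIV \<times> cbox 0 One) (\<lambda>(s, x). u' (x + s *\<^sub>R k) k)"
  proof -
    have "continuous_on (UNIV \<times> cbox 0 One) (\<lambda>p. snd p + fst p *\<^sub>R k)"
      by (intro continuous_intros)
    from continuous_on_compose2[OF cu' this] show ?thesis by (simp add: case_prod_beta)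
  qed
  have "(H has_field_derivative integral (cbox 0 One) (\<lambda>x. u' (x + 0 *\<^sub>R k) k)) (at 0 within UNIV)"
    unfolding H_def
    apply (rule leibniz_rule_field_derivative[OF d1 _ cont])
    using cu by (auto intro!: integrable_continuous continuous_intros continuous_on_compose2[OF cu])
  then have dH: "(H has_field_derivative integral (cbox 0 One) (\<lambda>x. u' x k)) (at 0)" by simp
  have "((\<lambda>s. integral (cbox 0 One) u) has_field_derivative integral (cbox 0 One) (\<lambda>x. u' x k)) (at 0)"
    apply (rule has_field_derivative_transform_within_open[OF dH, of "{-1<..<1}"])
    using transl_inv2[OF cu per k] by (auto simp: H_def)
  then show ?thesis using DERIV_const DERIV_unique by blast
qed



lemma D_lin: "smooth s \<Longrightarrow> linear (D s p)"
  using smooth_deriv has_derivative_linear by blast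

lemma D_expand: "smooth (s::'m::euclidean_space \<Rightarrow> 'c::real_normed_vector) \<Longrightarrow>
   D s p v = (\<Sum>b\<in>Basis. (v \<bullet> b) *\<^sub>R D s p b)"
  using linear_expand[OF D_lin] by blast

lemma cont_D:
  fixes s :: "'m::euclidean_space \<Rightarrow> 'c::real_normed_vector"
  assumes s: "smooth s" and f: "continuous_on A f" and g: "continuous_on A g"
  shows "continuous_on A (\<lambda>z. D s (f z) (g z))"
proof -
  have c1: "continuous_on A (\<lambda>z. D s (f z) b)" for b
    using continuous_on_compose2[OF smooth_cont[OF smooth_D[OF s, of b]] f] by simp
  have "continuous_on A (\<lambda>z. \<Sum>b\<in>Basis. (g z \<bullet> b) *\<^sub>R D s (f z) b)"
    by (intro continuous_on_sum continuous_on_scaleR continuous_on_inner g c1 continuous_on_const)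
  moreover have "(\<lambda>z. D s (f z) (g z)) = (\<lambda>z. \<Sum>b\<in>Basis. (g z \<bullet> b) *\<^sub>R D s (f z) b)"
    by (rule ext) (rule D_expand[OF s])
  ultimately show ?thesis by metis
qed

lemma var_deriv:
  fixes s :: "'m::euclidean_space \<Rightarrow> real" and Z Y :: "'a::euclidean_space \<Rightarrow> 'm"
    and a c :: "'a \<Rightarrow> real"
  assumes s: "smooth s" and cZ: "continuous_on UNIV Z" and cY: "continuous_on UNIV Y"
    and ca: "continuous_on UNIV a" and cc: "continuous_on UNIV c"
  shows "((\<lambda>t. integral (cbox 0 One) (\<lambda>x. (a x + t * c x) * s (Z x + t *\<^sub>R Y x)))
     has_field_derivative integral (cbox 0 One) (\<lambda>x. c x * s (Z x) + a x * D s (Z x) (Y x))) (at 0)"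
proof -
  define fx where "fx t x = c x * s (Z x + t *\<^sub>R Y x) + (a x + t * c x) * D s (Z x + t *\<^sub>R Y x) (Y x)" for t x
  have d: "((\<lambda>t. (a x + t * c x) * s (Z x + t *\<^sub>R Y x)) has_field_derivative fx t x) (at t within UNIV)" for t x
  proof -
    have "((\<lambda>t. Z x + t *\<^sub>R Y x) has_derivative (\<lambda>h. h *\<^sub>R Y x)) (at t)"
      by (auto intro!: derivative_eq_intros)
    from diff_chain_at[OF this smooth_deriv[OF s]]
    have d1: "((\<lambda>t. s (Z x + t *\<^sub>R Y x)) has_derivative (\<lambda>h. D s (Z x + t *\<^sub>R Y x) (h *\<^sub>R Y x))) (at t)"
      by (simp add: o_def)
    have d2: "((\<lambda>t. a x + t * c x) has_derivative (\<lambda>h. h * c x)) (at t)"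
      by (auto intro!: derivative_eq_intros)
    from has_derivative_mult[OF d2 d1]
    have "((\<lambda>t. (a x + t * c x) * s (Z x + t *\<^sub>R Y x)) has_derivative
       (\<lambda>h. (a x + t * c x) * D s (Z x + t *\<^sub>R Y x) (h *\<^sub>R Y x) + h * c x * s (Z x + t *\<^sub>R Y x))) (at t)" .
    moreover have "(\<lambda>h. (a x + t * c x) * D s (Z x + t *\<^sub>R Y x) (h *\<^sub>R Y x) + h * c x * s (Z x + t *\<^sub>R Y x))
       = (*) (fx t x)"
      using D_lin[OF s] by (auto simp: fx_def linear_scale algebra_simps)
    ultimately show ?thesis by (simp add: has_field_derivative_def)
  qed
  have cZY: "continuous_on (UNIV \<times> cbox 0 One) (\<lambda>p. Z (snd p) + fst p *\<^sub>R Y (snd p))"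
    by (intro continuous_intros continuous_on_compose2[OF cZ] continuous_on_compose2[OF cY]) auto
  have cont: "continuous_on (UNIV \<times> cbox 0 One) (\<lambda>(t, x). fx t x)"
  proof -
    have "continuous_on (UNIV \<times> cbox 0 One) (\<lambda>p. fx (fst p) (snd p))"
      unfolding fx_def
      by (intro continuous_intros cont_D[OF s] cZY continuous_on_compose2[OF cc]
          continuous_on_compose2[OF ca] continuous_on_compose2[OF cY]
          continuous_on_compose2[OF smooth_cont[OF s] cZY]) auto
    then show ?thesis by (simp add: case_prod_beta)
  qed
  have int: "(\<lambda>x. (a x + t * c x) * s (Z x + t *\<^sub>R Y x)) integrable_on cbox 0 One" for t
    by (rule integrable_continuous,
        intro continuous_intros continuous_on_compose2[OF smooth_cont[OF s]] continuous_on_subset[OF cZ]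
          continuous_on_subset[OF cY] continuous_on_subset[OF ca] continuous_on_subset[OF cc]) auto
  have "((\<lambda>t. integral (cbox 0 One) (\<lambda>x. (a x + t * c x) * s (Z x + t *\<^sub>R Y x)))
     has_field_derivative integral (cbox 0 One) (fx 0)) (at 0 within UNIV)"
    by (rule leibniz_rule_field_derivative[OF d int cont]) auto
  moreover have "fx 0 = (\<lambda>x. c x * s (Z x) + a x * D s (Z x) (Y x))" by (rule ext) (simp add: fx_def)
  ultimately show ?thesis by simp
qed



lemma cont_int: "continuous_on UNIV (f::'a::euclidean_space\<Rightarrow>'b::banach) \<Longrightarrow> f integrable_on cbox a b"
  by (meson continuous_on_subset integrable_continuous subset_UNIV)

lemma D_eq: "D f p = frechet_derivative f (at p)"
  by (rule ext) (simp add: D_def)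

lemma D_unique: "(f has_derivative f') (at p) \<Longrightarrow> D f p = f'"
  unfolding D_eq by (rule frechet_derivative_at[symmetric])

lemma D_periodic:
  assumes s: "smooth Z" and per: "\<And>x. Z (x + k) = Z x"
  shows "D Z (x + k) = D Z x"
proof -
  have "((\<lambda>y. y + k) has_derivative (\<lambda>v. v)) (at x)" by (auto intro!: derivative_eq_intros)
  from diff_chain_at[OF this smooth_deriv[OF s]]
  have "((\<lambda>y. Z (y + k)) has_derivative D Z (x + k)) (at x)" by (simp add: o_def)
  then have "(Z has_derivative D Z (x + k)) (at x)" using per by simp
  then show ?thesis by (simp add: D_unique)
qed

lemma D_comb:
  assumes "smooth Z" "smooth Y"
  shows "D (\<lambda>x. Z x + t *\<^sub>R Y x) x v = D Z x v + t *\<^sub>R D Y x v"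
proof -
  have "((\<lambda>x. Z x + t *\<^sub>R Y x) has_derivative (\<lambda>v. D Z x v + t *\<^sub>R D Y x v)) (at x)"
    by (rule has_derivative_add[OF smooth_deriv[OF assms(1)] has_derivative_scaleR_right[OF smooth_deriv[OF assms(2)]]])
  then show ?thesis by (simp add: D_unique)
qed

lemma Omega_sharp_eq:
  "Omega_sharp (Omega_of \<omega> p) X V = (\<Sum>i\<in>UNIV. \<omega> i p V (X (axis i 1)))"
  by (simp add: Omega_sharp_def trace_def matrix_def Omega_of_def)

lemma D_theta:
  assumes th: "smooth_1form \<theta>"
  shows "D (\<lambda>q. \<theta> q W) p V = (\<Sum>b\<in>Basis. (W \<bullet> b) * D (\<lambda>q. \<theta> q b) p V)"
proof -
  have lin: "linear (\<theta> q)" for q using th by (simp add: smooth_1form_def)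
  have sm: "smooth (\<lambda>q. \<theta> q b)" for b using th by (simp add: smooth_1form_def)
  have eq: "(\<lambda>q. \<theta> q W) = (\<lambda>q. \<Sum>b\<in>Basis. (W \<bullet> b) * \<theta> q b)"
    by (rule ext) (subst linear_expand[OF lin], simp)
  have "((\<lambda>q. \<Sum>b\<in>Basis. (W \<bullet> b) * \<theta> q b) has_derivative (\<lambda>V. \<Sum>b\<in>Basis. (W \<bullet> b) * D (\<lambda>q. \<theta> q b) p V)) (at p)"
    by (rule has_derivative_sum, rule has_derivative_mult_right, rule smooth_deriv[OF sm])
  then have "D (\<lambda>q. \<Sum>b\<in>Basis. (W \<bullet> b) * \<theta> q b) p = (\<lambda>V. \<Sum>b\<in>Basis. (W \<bullet> b) * D (\<lambda>q. \<theta> q b) p V)"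
    by (rule D_unique)
  then show ?thesis using eq by simp
qed



lemma first_var:
  fixes \<omega> :: "'n::finite \<Rightarrow> 'm::euclidean_space \<Rightarrow> 'm \<Rightarrow> 'm \<Rightarrow> real"
    and \<theta> :: "'n \<Rightarrow> 'm \<Rightarrow> 'm \<Rightarrow> real" and S :: "'m \<Rightarrow> real" and Z Y :: "real^'n \<Rightarrow> 'm"
  assumes th: "\<And>i. smooth_1form (\<theta> i)" and dth: "\<And>i. d1 (\<theta> i) = \<omega> i" and S: "smooth S"
    and Z: "smooth Z" "torus_periodic Z" and Y: "smooth Y" "torus_periodic Y"
  shows "((\<lambda>t. action \<theta> S (\<lambda>x. Z x + t *\<^sub>R Y x)) has_real_derivative
     integral (cbox 0 One) (\<lambda>x. (\<Sum>i\<in>UNIV. \<omega> i (Z x) (Y x) (D Z x (axis i 1))) - D S (Z x) (Y x))) (at 0)"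
proof -
  define T where "T = (\<lambda>i b p. \<theta> i p b)"
  define a where "a = (\<lambda>i b x. D Z x (axis i 1) \<bullet> b)"
  define c where "c = (\<lambda>i b x. D Y x (axis i 1) \<bullet> b)"
  define cube where "cube = cbox (0::real^'n) One"
  have lin: "linear (\<theta> i p)" for i p using th by (simp add: smooth_1form_def)
  have smT: "smooth (T i b)" for i b using th by (simp add: smooth_1form_def T_def)
  have cZ: "continuous_on UNIV Z" by (rule smooth_cont[OF Z(1)])
  have cY: "continuous_on UNIV Y" by (rule smooth_cont[OF Y(1)])
  have ca: "continuous_on UNIV (a i b)" for i b
    unfolding a_def by (intro smooth_cont smooth_inner smooth_D Z)
  have cc: "continuous_on UNIV (c i b)" for i b
    unfolding c_def by (intro smooth_cont smooth_inner smooth_D Y)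
  have cDZ: "continuous_on UNIV (\<lambda>x. D Z x v)" for v by (intro smooth_cont smooth_D Z)
  have cDY: "continuous_on UNIV (\<lambda>x. D Y x v)" for v by (intro smooth_cont smooth_D Y)
  have cYb: "continuous_on UNIV (\<lambda>x. Y x \<bullet> b)" for b by (intro continuous_intros cY)
  have cTZ: "continuous_on UNIV (\<lambda>x. T i b (Z x))" for i b
    using continuous_on_compose2[OF smooth_cont[OF smT] cZ] by simp
  have cSZ: "continuous_on UNIV (\<lambda>x. S (Z x))"
    using continuous_on_compose2[OF smooth_cont[OF S] cZ] by simp
  have cDTY: "continuous_on UNIV (\<lambda>x. D (T i b) (Z x) (Y x))" for i b
    by (rule cont_D[OF smT cZ cY])
  have cDTZ: "continuous_on UNIV (\<lambda>x. D (T i b) (Z x) (D Z x v))" for i b v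
    by (rule cont_D[OF smT cZ cDZ])
  have cDS: "continuous_on UNIV (\<lambda>x. D S (Z x) (Y x))"
    by (rule cont_D[OF S cZ cY])
  have cZt: "continuous_on UNIV (\<lambda>x. Z x + t *\<^sub>R Y x)" for t by (intro continuous_intros cZ cY)
  have cTt: "continuous_on UNIV (\<lambda>x. (a i b x + t * c i b x) * T i b (Z x + t *\<^sub>R Y x))" for i b t
    by (intro continuous_intros ca cc continuous_on_compose2[OF smooth_cont[OF smT] cZt]) auto
  have cSt: "continuous_on UNIV (\<lambda>x. (-1 + t * 0) * S (Z x + t *\<^sub>R Y x))" for t
    by (intro continuous_intros continuous_on_compose2[OF smooth_cont[OF S] cZt]) auto
  have act: "action \<theta> S (\<lambda>x. Z x + t *\<^sub>R Y x) =
      (\<Sum>i\<in>UNIV. \<Sum>b\<in>Basis. integral cube (\<lambda>x. (a i b x + t * c i b x) * T i b (Z x + t *\<^sub>R Y x)))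
      + integral cube (\<lambda>x. (-1 + t * 0) * S (Z x + t *\<^sub>R Y x))" for t
  proof -
    have pw: "\<theta> i (Z x + t *\<^sub>R Y x) (D (\<lambda>x. Z x + t *\<^sub>R Y x) x (axis i 1)) =
        (\<Sum>b\<in>Basis. (a i b x + t * c i b x) * T i b (Z x + t *\<^sub>R Y x))" for i x
      using linear_expand[OF lin, of i "Z x + t *\<^sub>R Y x" "D Z x (axis i 1) + t *\<^sub>R D Y x (axis i 1)"]
      by (simp add: D_comb[OF Z(1) Y(1)] a_def c_def T_def inner_add_left)
    have "integral cube (\<lambda>x. \<Sum>i\<in>UNIV. \<theta> i (Z x + t *\<^sub>R Y x) (D (\<lambda>x. Z x + t *\<^sub>R Y x) x (axis i 1)))
        = integral cube (\<lambda>x. \<Sum>i\<in>UNIV. \<Sum>b\<in>Basis. (a i b x + t * c i b x) * T i b (Z x + t *\<^sub>R Y x))"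
      by (simp add: pw)
    also have "\<dots> = (\<Sum>i\<in>UNIV. integral cube (\<lambda>x. \<Sum>b\<in>Basis. (a i b x + t * c i b x) * T i b (Z x + t *\<^sub>R Y x)))"
      by (rule integral_sum) (auto simp: cube_def intro!: cont_int continuous_on_sum cTt)
    also have "\<dots> = (\<Sum>i\<in>UNIV. \<Sum>b\<in>Basis. integral cube (\<lambda>x. (a i b x + t * c i b x) * T i b (Z x + t *\<^sub>R Y x)))"
      by (rule sum.cong, simp, rule integral_sum) (auto simp: cube_def intro!: cont_int cTt)
    finally have e1: "integral cube (\<lambda>x. \<Sum>i\<in>UNIV. \<theta> i (Z x + t *\<^sub>R Y x) (D (\<lambda>x. Z x + t *\<^sub>R Y x) x (axis i 1)))
        = (\<Sum>i\<in>UNIV. \<Sum>b\<in>Basis. integral cube (\<lambda>x. (a i b x + t * c i b x) * T i b (Z x + t *\<^sub>R Y x)))" .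
    have e2: "integral cube (\<lambda>x. (-1 + t * 0) * S (Z x + t *\<^sub>R Y x)) = - integral cube (\<lambda>x. S (Z x + t *\<^sub>R Y x))"
      by simp
    show ?thesis unfolding action_def using e1 e2 by (simp add: cube_def)
  qed
  have dv: "((\<lambda>t. integral cube (\<lambda>x. (a i b x + t * c i b x) * T i b (Z x + t *\<^sub>R Y x))) has_real_derivative
      integral cube (\<lambda>x. c i b x * T i b (Z x) + a i b x * D (T i b) (Z x) (Y x))) (at 0)" for i b
    unfolding cube_def by (rule var_deriv[OF smT cZ cY ca cc])
  have dS: "((\<lambda>t. integral cube (\<lambda>x. (-1 + t * 0) * S (Z x + t *\<^sub>R Y x))) has_real_derivative
      integral cube (\<lambda>x. 0 * S (Z x) + (-1) * D S (Z x) (Y x))) (at 0)"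
    unfolding cube_def by (rule var_deriv[OF S cZ cY]) (auto intro: continuous_intros)
  have dall: "((\<lambda>t. (\<Sum>i\<in>UNIV. \<Sum>b\<in>Basis. integral cube (\<lambda>x. (a i b x + t * c i b x) * T i b (Z x + t *\<^sub>R Y x)))
      + integral cube (\<lambda>x. (-1 + t * 0) * S (Z x + t *\<^sub>R Y x))) has_real_derivative
      (\<Sum>i\<in>UNIV. \<Sum>b\<in>Basis. integral cube (\<lambda>x. c i b x * T i b (Z x) + a i b x * D (T i b) (Z x) (Y x)))
      + integral cube (\<lambda>x. 0 * S (Z x) + (-1) * D S (Z x) (Y x))) (at 0)"
    by (intro DERIV_add DERIV_sum dv dS)
  have ibp_ib: "integral cube (\<lambda>x. c i b x * T i b (Z x)) =
      - integral cube (\<lambda>x. (Y x \<bullet> b) * D (T i b) (Z x) (D Z x (axis i 1)))" for i b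
  proof -
    define u where "u x = (Y x \<bullet> b) * T i b (Z x)" for x
    define u' where "u' x h = (Y x \<bullet> b) * D (T i b) (Z x) (D Z x h) + (D Y x h \<bullet> b) * T i b (Z x)" for x h
    have du: "(u has_derivative u' x) (at x)" for x
    proof -
      have d1: "((\<lambda>x. Y x \<bullet> b) has_derivative (\<lambda>h. D Y x h \<bullet> b)) (at x)"
        by (rule bounded_linear.has_derivative[OF bounded_linear_inner_left smooth_deriv[OF Y(1)]])
      have d2: "((\<lambda>x. T i b (Z x)) has_derivative (\<lambda>h. D (T i b) (Z x) (D Z x h))) (at x)"
        using diff_chain_at[OF smooth_deriv[OF Z(1)] smooth_deriv[OF smT]] by (simp add: o_def)
      show ?thesis unfolding u_def[abs_def] u'_def using has_derivative_mult[OF d1 d2] by simp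
    qed
    have cu': "continuous_on UNIV (\<lambda>x. u' x (axis i 1))"
      unfolding u'_def by (intro continuous_intros cYb cDTZ cTZ cDY)
    have per: "u (x + axis i 1) = u x" for x
      using Y(2) Z(2) by (simp add: u_def torus_periodic_def)
    have k: "axis i (1::real) \<in> Basis" by simp
    have z: "integral (cbox 0 One) (\<lambda>x. u' x (axis i 1)) = 0" by (rule ibp[OF du cu' per k])
    have "integral cube (\<lambda>x. u' x (axis i 1)) = integral cube (\<lambda>x. (Y x \<bullet> b) * D (T i b) (Z x) (D Z x (axis i 1)))
       + integral cube (\<lambda>x. c i b x * T i b (Z x))"
      unfolding u'_def c_def cube_def
      by (rule integral_add; rule cont_int; intro continuous_intros cYb cDTZ cTZ cDY)
    then show ?thesis using z by (simp add: cube_def)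
  qed
  have pw2: "(\<Sum>b\<in>Basis. a i b x * D (T i b) (Z x) (Y x) - (Y x \<bullet> b) * D (T i b) (Z x) (D Z x (axis i 1)))
      = \<omega> i (Z x) (Y x) (D Z x (axis i 1))" for i x
  proof -
    have "\<omega> i (Z x) (Y x) (D Z x (axis i 1)) = d1 (\<theta> i) (Z x) (Y x) (D Z x (axis i 1))" by (simp only: dth)
    also have "\<dots> = (\<Sum>b\<in>Basis. a i b x * D (T i b) (Z x) (Y x)) - (\<Sum>b\<in>Basis. (Y x \<bullet> b) * D (T i b) (Z x) (D Z x (axis i 1)))"
      unfolding d1_def D_theta[OF th, of i "D Z x (axis i 1)" "Z x" "Y x"] D_theta[OF th, of i "Y x" "Z x" "D Z x (axis i 1)"]
      by (simp add: a_def T_def)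
    finally show ?thesis by (simp add: sum_subtractf)
  qed
  have val: "(\<Sum>i\<in>UNIV. \<Sum>b\<in>Basis. integral cube (\<lambda>x. c i b x * T i b (Z x) + a i b x * D (T i b) (Z x) (Y x)))
      + integral cube (\<lambda>x. 0 * S (Z x) + (-1) * D S (Z x) (Y x))
     = integral (cbox 0 One) (\<lambda>x. (\<Sum>i\<in>UNIV. \<omega> i (Z x) (Y x) (D Z x (axis i 1))) - D S (Z x) (Y x))"
  proof -
    have s1: "integral cube (\<lambda>x. c i b x * T i b (Z x) + a i b x * D (T i b) (Z x) (Y x))
       = integral cube (\<lambda>x. a i b x * D (T i b) (Z x) (Y x) - (Y x \<bullet> b) * D (T i b) (Z x) (D Z x (axis i 1)))" for i b
    proof -
      have "integral cube (\<lambda>x. c i b x * T i b (Z x) + a i b x * D (T i b) (Z x) (Y x))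
          = integral cube (\<lambda>x. c i b x * T i b (Z x)) + integral cube (\<lambda>x. a i b x * D (T i b) (Z x) (Y x))"
        unfolding cube_def
        by (rule integral_add; rule cont_int; intro continuous_intros ca cc cTZ cDTY)
      moreover have "integral cube (\<lambda>x. a i b x * D (T i b) (Z x) (Y x) - (Y x \<bullet> b) * D (T i b) (Z x) (D Z x (axis i 1)))
          = integral cube (\<lambda>x. a i b x * D (T i b) (Z x) (Y x)) - integral cube (\<lambda>x. (Y x \<bullet> b) * D (T i b) (Z x) (D Z x (axis i 1)))"
        unfolding cube_def
        by (rule integral_diff; rule cont_int; intro continuous_intros ca cYb cDTZ cDTY)
      ultimately show ?thesis using ibp_ib[of i b] by simp
    qed
    have s2: "(\<Sum>i\<in>UNIV. \<Sum>b\<in>Basis. integral cube (\<lambda>x. a i b x * D (T i b) (Z x) (Y x) - (Y x \<bullet> b) * D (T i b) (Z x) (D Z x (axis i 1))))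
       = integral cube (\<lambda>x. \<Sum>i\<in>UNIV. \<Sum>b\<in>Basis. a i b x * D (T i b) (Z x) (Y x) - (Y x \<bullet> b) * D (T i b) (Z x) (D Z x (axis i 1)))"
    proof -
      have "integral cube (\<lambda>x. \<Sum>i\<in>UNIV. \<Sum>b\<in>Basis. a i b x * D (T i b) (Z x) (Y x) - (Y x \<bullet> b) * D (T i b) (Z x) (D Z x (axis i 1)))
        = (\<Sum>i\<in>UNIV. integral cube (\<lambda>x. \<Sum>b\<in>Basis. a i b x * D (T i b) (Z x) (Y x) - (Y x \<bullet> b) * D (T i b) (Z x) (D Z x (axis i 1))))"
        unfolding cube_def
        by (rule integral_sum; simp; rule cont_int; intro continuous_intros ca cYb cDTZ cDTY)
      also have "\<dots> = (\<Sum>i\<in>UNIV. \<Sum>b\<in>Basis. integral cube (\<lambda>x. a i b x * D (T i b) (Z x) (Y x) - (Y x \<bullet> b) * D (T i b) (Z x) (D Z x (axis i 1))))"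
        unfolding cube_def
        by (rule sum.cong, simp, rule integral_sum; simp; rule cont_int; intro continuous_intros ca cYb cDTZ cDTY)
      finally show ?thesis by simp
    qed
    have s3: "integral cube (\<lambda>x. \<Sum>i\<in>UNIV. \<Sum>b\<in>Basis. a i b x * D (T i b) (Z x) (Y x) - (Y x \<bullet> b) * D (T i b) (Z x) (D Z x (axis i 1)))
        = integral cube (\<lambda>x. \<Sum>i\<in>UNIV. \<omega> i (Z x) (Y x) (D Z x (axis i 1)))"
      by (simp add: pw2)
    have cW: "continuous_on UNIV (\<lambda>x. \<Sum>i\<in>UNIV. \<Sum>b\<in>Basis. a i b x * D (T i b) (Z x) (Y x) - (Y x \<bullet> b) * D (T i b) (Z x) (D Z x (axis i 1)))"
      by (intro continuous_intros ca cYb cDTZ cDTY)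
    then have cW': "continuous_on UNIV (\<lambda>x. \<Sum>i\<in>UNIV. \<omega> i (Z x) (Y x) (D Z x (axis i 1)))"
      by (simp add: pw2)
    have s4: "integral cube (\<lambda>x. (\<Sum>i\<in>UNIV. \<omega> i (Z x) (Y x) (D Z x (axis i 1))) - D S (Z x) (Y x))
       = integral cube (\<lambda>x. \<Sum>i\<in>UNIV. \<omega> i (Z x) (Y x) (D Z x (axis i 1))) + integral cube (\<lambda>x. 0 * S (Z x) + (-1) * D S (Z x) (Y x))"
    proof -
      have "integral cube (\<lambda>x. (\<Sum>i\<in>UNIV. \<omega> i (Z x) (Y x) (D Z x (axis i 1))) - D S (Z x) (Y x))
          = integral cube (\<lambda>x. \<Sum>i\<in>UNIV. \<omega> i (Z x) (Y x) (D Z x (axis i 1))) - integral cube (\<lambda>x. D S (Z x) (Y x))"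
        unfolding cube_def by (rule integral_diff; rule cont_int; intro cW' cDS)
      then show ?thesis by simp
    qed
    show ?thesis using s1 s2 s3 s4 by (simp add: cube_def)
  qed
  have "((\<lambda>t. action \<theta> S (\<lambda>x. Z x + t *\<^sub>R Y x)) has_real_derivative
      (\<Sum>i\<in>UNIV. \<Sum>b\<in>Basis. integral cube (\<lambda>x. c i b x * T i b (Z x) + a i b x * D (T i b) (Z x) (Y x)))
      + integral cube (\<lambda>x. 0 * S (Z x) + (-1) * D S (Z x) (Y x))) (at 0)"
    using dall by (simp only: act)
  then show ?thesis using val by simp
qed



lemma One_nth: "(One::real^'n) $ i = 1"
  by (simp add: cart_eq_inner_axis inner_sum_left inner_Basis)

lemma sum_axis_nth: "(\<Sum>i\<in>UNIV. (r i::real) *\<^sub>R axis i 1) $ j = r j"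
  by (simp add: axis_def if_distrib sum.delta cong: if_cong)

lemma per_ext:
  fixes f :: "real^'n \<Rightarrow> real"
  assumes per: "\<And>x i. f (x + axis i 1) = f x" and z: "\<And>x. x \<in> cbox 0 One \<Longrightarrow> f x = 0"
  shows "f x = 0"
proof -
  have nat_shift: "f (y + real n *\<^sub>R axis i 1) = f y" for y n i
  proof (induction n)
    case 0 then show ?case by simp
  next
    case (Suc n)
    have "f (y + real (Suc n) *\<^sub>R axis i 1) = f ((y + real n *\<^sub>R axis i 1) + axis i 1)"
      by (simp add: algebra_simps)
    also have "\<dots> = f (y + real n *\<^sub>R axis i 1)" by (rule per)
    also have "\<dots> = f y" by (rule Suc)
    finally show ?case .
  qed
  have int_shift: "f (y + of_int k *\<^sub>R axis i 1) = f y" for y k i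
  proof (cases "k \<ge> 0")
    case True
    define n where "n = nat k"
    have "k = int n" using True by (simp add: n_def)
    then show ?thesis using nat_shift by simp
  next
    case False
    define n where "n = nat (- k)"
    have k: "k = - int n" using False by (simp add: n_def)
    have "f y = f ((y + of_int k *\<^sub>R axis i 1) + real n *\<^sub>R axis i 1)" using k by simp
    then show ?thesis using nat_shift by simp
  qed
  have sum_shift: "finite I \<Longrightarrow> f (y + (\<Sum>i\<in>I. of_int (m i) *\<^sub>R axis i 1)) = f y" for I y m
  proof (induction I rule: finite_induct)
    case empty then show ?case by simp
  next
    case (insert j I)
    have "f (y + (\<Sum>i\<in>insert j I. of_int (m i) *\<^sub>R axis i 1)) = f ((y + (\<Sum>i\<in>I. of_int (m i) *\<^sub>R axis i 1)) + of_int (m j) *\<^sub>R axis j 1)"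
      using insert by (simp add: algebra_simps)
    also have "\<dots> = f (y + (\<Sum>i\<in>I. of_int (m i) *\<^sub>R axis i 1))" by (rule int_shift)
    also have "\<dots> = f y" by (rule insert.IH)
    finally show ?case .
  qed
  define m where "m i = \<lfloor>x $ i\<rfloor>" for i
  define y where "y = x - (\<Sum>i\<in>UNIV. of_int (m i) *\<^sub>R axis i (1::real))"
  have yn: "y $ j = x $ j - of_int \<lfloor>x $ j\<rfloor>" for j
    unfolding y_def m_def using sum_axis_nth[of "\<lambda>i. of_int \<lfloor>x $ i\<rfloor>" j] by simp
  have "y \<in> cbox 0 One"
    unfolding mem_box_cart by (auto simp: yn One_nth simp del: sum_component) linarith
  then have "f y = 0" by (rule z)
  moreover have "x = y + (\<Sum>i\<in>UNIV. of_int (m i) *\<^sub>R axis i (1::real))" by (simp add: y_def)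
  ultimately show ?thesis using sum_shift[of UNIV y m] by simp
qed



theorem lemma4p8:
  fixes \<omega> :: "'n::finite \<Rightarrow> 'm::euclidean_space \<Rightarrow> 'm \<Rightarrow> 'm \<Rightarrow> real"
    and \<theta> :: "'n \<Rightarrow> 'm \<Rightarrow> 'm \<Rightarrow> real"
    and S :: "'m \<Rightarrow> real"
    and Z :: "real^'n \<Rightarrow> 'm"
  assumes "polysymplectic \<omega>"
    and "\<And>i. smooth_1form (\<theta> i)"
    and "\<And>i. d1 (\<theta> i) = \<omega> i"
    and "smooth S"
    and "torus_smooth_map Z"
  shows "critical_point (action \<theta> S) Z \<longleftrightarrow>
         (\<forall>x. D S (Z x) = Omega_sharp (Omega_of \<omega> (Z x)) (D Z x))"
proof -
  note poly = assms(1) and th = assms(2) and dth = assms(3) and S = assms(4)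
  have Zs: "smooth Z" and Zp: "torus_periodic Z" using assms(5) by (auto simp: torus_smooth_map_def)
  have sm2: "smooth_2form (\<omega> i)" for i using poly by (simp add: polysymplectic_def closed_2form_def)
  have bil: "bilinear (\<omega> i p)" for i p using sm2 unfolding smooth_2form_def by blast
  have linl: "linear (\<lambda>V. \<omega> i p V W)" for i p W using bil[of i p] by (simp add: bilinear_def)
  have linr: "linear (\<omega> i p V)" for i p V
  proof -
    have "\<forall>x. linear (\<lambda>y. \<omega> i p x y)" using bil[of i p] unfolding bilinear_def by (rule conjunct1)
    then have "linear (\<lambda>y. \<omega> i p V y)" by (rule spec)
    then show ?thesis by (simp only: eta_contract_eq)
  qed
  have smw: "smooth (\<lambda>p. \<omega> i p V W)" for i V W using sm2 unfolding smooth_2form_def by blast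
  define g where "g x V = (\<Sum>i\<in>UNIV. \<omega> i (Z x) V (D Z x (axis i 1))) - D S (Z x) V" for x V
  have glin: "linear (g x)" for x
  proof -
    have "linear (\<lambda>V. (\<Sum>i\<in>UNIV. \<omega> i (Z x) V (D Z x (axis i 1))) - D S (Z x) V)"
      by (intro linear_compose_sub linear_compose_sum ballI linl D_lin S)
    then show ?thesis by (simp add: g_def[abs_def])
  qed
  have rhs: "(\<forall>x. D S (Z x) = Omega_sharp (Omega_of \<omega> (Z x)) (D Z x)) \<longleftrightarrow> (\<forall>x V. g x V = 0)"
    by (auto simp: fun_eq_iff Omega_sharp_eq g_def)
  have fv: "((\<lambda>t. action \<theta> S (\<lambda>x. Z x + t *\<^sub>R Y x)) has_real_derivative
     integral (cbox 0 One) (\<lambda>x. g x (Y x))) (at 0)" if "torus_smooth_map Y" for Y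
    using first_var[OF th dth S Zs Zp, of Y] that by (simp add: torus_smooth_map_def g_def)
  show ?thesis
  proof
    assume crit: "critical_point (action \<theta> S) Z"
    have hz: "g x c = 0" if c: "c \<in> Basis" for x c
    proof -
      define h where "h x = g x c" for x
      have hexp: "h = (\<lambda>x. (\<Sum>i\<in>UNIV. \<Sum>b\<in>Basis. (D Z x (axis i 1) \<bullet> b) * \<omega> i (Z x) c b) - D S (Z x) c)"
      proof (rule ext)
        fix x
        have "\<omega> i (Z x) c (D Z x (axis i 1)) = (\<Sum>b\<in>Basis. (D Z x (axis i 1) \<bullet> b) * \<omega> i (Z x) c b)" for i
          using linear_expand[OF linr, of i "Z x" c "D Z x (axis i 1)"] by simp
        then show "h x = (\<Sum>i\<in>UNIV. \<Sum>b\<in>Basis. (D Z x (axis i 1) \<bullet> b) * \<omega> i (Z x) c b) - D S (Z x) c"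
          by (simp add: h_def g_def)
      qed
      have hs: "smooth h"
        unfolding hexp
        by (intro smooth_diff smooth_sum smooth_times smooth_inner smooth_D Zs finite_Basis finite_UNIV
            smooth_comp[OF Zs smw] smooth_comp[OF Zs smooth_D[OF S]]) simp
      have DZp: "D Z (x + axis i 1) = D Z x" for x i
        by (rule D_periodic[OF Zs]) (use Zp in \<open>simp add: torus_periodic_def\<close>)
      have hp: "h (x + axis i 1) = h x" for x i
        using Zp DZp by (simp add: h_def g_def torus_periodic_def)
      define Y where "Y x = h x *\<^sub>R c" for x
      have Ys: "torus_smooth_map Y"
        unfolding torus_smooth_map_def torus_periodic_def Y_def
        using smooth_mult[OF hs smooth_const] hp by simp
      have d0: "((\<lambda>t. action \<theta> S (\<lambda>x. Z x + t *\<^sub>R Y x)) has_real_derivative 0) (at 0)"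
        using crit Ys by (simp add: critical_point_def)
      have "integral (cbox 0 One) (\<lambda>x. g x (Y x)) = 0"
        using DERIV_unique[OF fv[OF Ys] d0] .
      moreover have "g x (Y x) = (h x)\<^sup>2" for x
        using glin[of x] by (simp add: Y_def linear_scale h_def power2_eq_square)
      ultimately have i0: "integral (cbox 0 One) (\<lambda>x. (h x)\<^sup>2) = 0" by simp
      have ch: "continuous_on UNIV (\<lambda>x. (h x)\<^sup>2)" by (intro continuous_intros smooth_cont[OF hs])
      have hi: "((\<lambda>x. (h x)\<^sup>2) has_integral 0) (cbox 0 One)"
        using integrable_integral[OF cont_int[OF ch, of 0 One]] i0 by simp
      have "(h y)\<^sup>2 = 0" if "y \<in> cbox 0 One" for y
        by (rule has_integral_0_cbox_imp_0[OF continuous_on_subset[OF ch] _ hi _ that])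
           (auto simp: box_ne_empty)
      then have "h y = 0" if "y \<in> cbox 0 One" for y using that by simp
      then have "h x = 0" by (rule per_ext[OF hp])
      then show ?thesis by (simp add: h_def)
    qed
    have "g x V = 0" for x V
      using linear_expand[OF glin, of x V] hz by simp
    then show "\<forall>x. D S (Z x) = Omega_sharp (Omega_of \<omega> (Z x)) (D Z x)" using rhs by blast
  next
    assume "\<forall>x. D S (Z x) = Omega_sharp (Omega_of \<omega> (Z x)) (D Z x)"
    then have g0: "g x V = 0" for x V using rhs by blast
    show "critical_point (action \<theta> S) Z"
      unfolding critical_point_def
    proof (intro allI impI)
      fix Y :: "real^'n \<Rightarrow> 'm" assume "torus_smooth_map Y"
      from fv[OF this] show "((\<lambda>t. action \<theta> S (\<lambda>x. Z x + t *\<^sub>R Y x)) has_real_derivative 0) (at 0)"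
        by (simp add: g0)
    qed
  qed
qed


end
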